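(* For $s\in\mathbb{N}$ let $\mathcal{F}_s$ be the set of binary cubic forms $f=(a,b,c,d)$ over $\mathbb{F}_q[t]$ such that $\deg(D(f))=s$, $\deg(a)\le s/4$, $\deg(b)\le s/4$, $\deg(ad)\le s/2$, $\deg(bc)\le s/2$, and $\mathrm{sgn}(a)\in S$. Then, as $s\to\infty$, $\#\mathcal{F}_s\le \frac{q^3}{32}s^2q^s+O(sq^s)$ if $s$ is odd, and $\#\mathcal{F}_s\le\frac{q^4}{32}s^2q^s+O(sq^s)$ if $s$ is even.
   Context: $q$ is a prime power with $\gcd(q,6)=1$; $\mathrm{sgn}(H)$ is the leading coefficient of $H\in\mathbb{F}_q[t]$. A binary cubic form $(a,b,c,d)$ is $ax^3+bx^2y+cxy^2+dy^3$ over $\mathbb{F}_q[t]$ with discriminant $D(f)=18abcd+b^2c^2-4ac^3-4b^3d-27a^2d^2$, assumed irreducible (so $ad\neq0$). Fix a primitive root $h$ of $\mathbb{F}_q^*$ and $S=\{h^i:0\le i\le(q-3)/2\}$. *)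

theory Defs
  imports "HOL-Computational_Algebra.Computational_Algebra"
begin

text \<open>Binary cubic forms a x^3 + b x^2 y + c x y^2 + d y^3 over F_q[t],
  represented as quadruples (a,b,c,d) of polynomials.\<close>

type_synonym 'a bcf = "'a poly \<times> 'a poly \<times> 'a poly \<times> 'a poly"

definition bcf_disc :: "'a::field bcf \<Rightarrow> 'a poly" where
  "bcf_disc f = (case f of (a,b,c,d) \<Rightarrow>
     18*a*b*c*d + b^2*c^2 - 4*a*c^3 - 4*b^3*d - 27*a^2*d^2)"

text \<open>Irreducibility of the binary cubic form over the field F_q(t):
  a \<noteq> 0 (otherwise y divides the form), d \<noteq> 0, and the dehomogenisation
  a X^3 + b X^2 + c X + d is irreducible in F_q(t)[X].\<close>

definition bcf_irreducible :: "'a::field bcf \<Rightarrow> bool" where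
  "bcf_irreducible f = (case f of (a,b,c,d) \<Rightarrow>
     a \<noteq> 0 \<and> d \<noteq> 0 \<and> irreducible (map_poly to_fract [:d, c, b, a:]))"

definition primitive_root :: "'a::field \<Rightarrow> bool" where
  "primitive_root h \<longleftrightarrow> h \<noteq> 0 \<and> (\<forall>x. x \<noteq> 0 \<longrightarrow> (\<exists>k::nat. x = h ^ k))"

definition fsize :: "'a::finite itself \<Rightarrow> nat" where
  "fsize _ = card (UNIV :: 'a set)"

definition sgn_set :: "'a::{field,finite} \<Rightarrow> 'a set" where
  "sgn_set h = {h ^ i | i. i \<le> (card (UNIV :: 'a set) - 3) div 2}"

definition Fs :: "'a::{field,finite} \<Rightarrow> nat \<Rightarrow> 'a bcf set" where
  "Fs h s = {f. case f of (a,b,c,d) \<Rightarrow>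
      bcf_irreducible f \<and> bcf_disc f \<noteq> 0 \<and> degree (bcf_disc f) = s \<and>
      real (degree a) \<le> real s / 4 \<and> real (degree b) \<le> real s / 4 \<and>
      real (degree (a*d)) \<le> real s / 2 \<and> real (degree (b*c)) \<le> real s / 2 \<and>
      lead_coeff a \<in> sgn_set h}"

end

theory Submission
  imports Defs "HOL-Number_Theory.Residues"
begin

hide_const (open) UnivPoly.coeff


lemma poly_box:
  fixes T :: "nat \<Rightarrow> 'a::{zero,finite} set"
  shows "finite {p::'a poly. degree p \<le> n \<and> (\<forall>k\<le>n. coeff p k \<in> T k)}
    \<and> card {p::'a poly. degree p \<le> n \<and> (\<forall>k\<le>n. coeff p k \<in> T k)} \<le> (\<Prod>k\<le>n. card (T k))"
proof -
  let ?P = "{p::'a poly. degree p \<le> n \<and> (\<forall>k\<le>n. coeff p k \<in> T k)}"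
  define \<phi> where "\<phi> = (\<lambda>p::'a poly. restrict (coeff p) {..n})"
  have inj: "inj_on \<phi> ?P"
  proof (rule inj_onI)
    fix p r assume p: "p \<in> ?P" and r: "r \<in> ?P" and e: "\<phi> p = \<phi> r"
    show "p = r"
    proof (rule poly_eqI)
      fix k show "coeff p k = coeff r k"
      proof (cases "k \<le> n")
        case True then show ?thesis using fun_cong[OF e, of k] by (simp add: \<phi>_def)
      next
        case False
        have "coeff p k = 0" using p False by (intro coeff_eq_0) auto
        moreover have "coeff r k = 0" using r False by (intro coeff_eq_0) auto
        ultimately show ?thesis by simp
      qed
    qed
  qed
  have sub: "\<phi> ` ?P \<subseteq> PiE {..n} T" by (auto simp: \<phi>_def split: if_splits)
  have fin: "finite (PiE {..n} T)" by (intro finite_PiE) auto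
  have "finite (\<phi> ` ?P)" using finite_subset[OF sub fin] .
  hence f1: "finite ?P" using inj finite_image_iff by blast
  have "card ?P = card (\<phi> ` ?P)" using inj by (simp add: card_image)
  also have "\<dots> \<le> card (PiE {..n} T)" using sub fin by (rule card_mono[rotated])
  also have "\<dots> = (\<Prod>k\<le>n. card (T k))" by (simp add: card_PiE)
  finally show ?thesis using f1 by blast
qed

lemma L_bound:
  "finite {p::'a::{zero,finite} poly. degree p \<le> n} \<and>
   card {p::'a poly. degree p \<le> n} \<le> card (UNIV::'a set) ^ Suc n"
proof -
  have e: "{p::'a poly. degree p \<le> n} = {p::'a poly. degree p \<le> n \<and> (\<forall>k\<le>n. coeff p k \<in> (\<lambda>_. UNIV) k)}"
    by auto
  show ?thesis using poly_box[of n "\<lambda>_. UNIV"] unfolding e by simp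
qed

lemma A_bound:
  fixes S :: "'a::{zero,finite} set"
  shows "finite {a::'a poly. degree a = i \<and> lead_coeff a \<in> S} \<and>
   card {a::'a poly. degree a = i \<and> lead_coeff a \<in> S} \<le> card S * card (UNIV::'a set) ^ i"
proof -
  define T where "T = (\<lambda>k. if k = i then S else (UNIV::'a set))"
  have sub: "{a::'a poly. degree a = i \<and> lead_coeff a \<in> S} \<subseteq> {p::'a poly. degree p \<le> i \<and> (\<forall>k\<le>i. coeff p k \<in> T k)}"
    by (auto simp: T_def)
  have pr: "(\<Prod>k\<le>i. card (T k)) = card S * card (UNIV::'a set) ^ i"
  proof -
    have "(\<Prod>k\<le>i. card (T k)) = card (T i) * (\<Prod>k\<in>{..i}-{i}. card (T k))"
      by (rule prod.remove) auto
    also have "{..i}-{i} = {..<i}" by auto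
    also have "(\<Prod>k\<in>{..<i}. card (T k)) = (\<Prod>k\<in>{..<i}. card (UNIV::'a set))"
      by (rule prod.cong) (auto simp: T_def)
    finally show ?thesis by (simp add: T_def)
  qed
  have b: "finite {p::'a poly. degree p \<le> i \<and> (\<forall>k\<le>i. coeff p k \<in> T k)} \<and>
    card {p::'a poly. degree p \<le> i \<and> (\<forall>k\<le>i. coeff p k \<in> T k)} \<le> card S * card (UNIV::'a set) ^ i"
    using poly_box[of i T] pr by simp
  show ?thesis using b sub card_mono finite_subset by (metis (no_types, lifting) le_trans)
qed


lemma two_ne_zero_field:
  assumes "coprime (card (UNIV::'a::{field,finite} set)) (6::nat)"
  shows "(2::'a) \<noteq> 0"
proof
  assume z: "(2::'a) = 0"
  have "of_nat 2 = (0::'a)" using z by simp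
  hence d: "CHAR('a) dvd 2" by (simp only: of_nat_eq_0_iff_char_dvd)
  have "CHAR('a) \<noteq> Suc 0" by simp
  moreover have "CHAR('a) \<noteq> 0" using finite_imp_CHAR_pos[where 'a='a] by simp
  moreover have "CHAR('a) \<le> 2" using d by (simp add: dvd_imp_le)
  ultimately have "CHAR('a) = 2" by linarith
  hence "2 dvd card (UNIV::'a set)" using CHAR_dvd_CARD[where 'a='a] by simp
  moreover have "(2::nat) dvd 6" by simp
  ultimately have "2 dvd gcd (card (UNIV::'a set)) 6" by simp
  thus False using assms by simp
qed

lemma disc_b0:
  fixes a c d :: "'a::field poly"
  shows "bcf_disc (a,0,c,d) = - (4*a*c^3 + 27*(a*d)^2)"
  by (simp add: bcf_disc_def power2_eq_square algebra_simps)


lemma card_Fs_bound: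
  fixes h :: "'a::{field,finite}" and s :: nat
  assumes four: "(4::'a) \<noteq> 0"
  defines "Q \<equiv> card (UNIV::'a set)"
  defines "t \<equiv> s div 4" and "m \<equiv> s div 2" and "u \<equiv> s div 3"
  shows "card (Fs h s) \<le> (t + 1)^2 * card (sgn_set h) * Q^(2*m+3)
          + (t + 1) * card (sgn_set h) * Q^(m + u + 2)"
proof -
  define S where "S = sgn_set h"
  define L where "L n = {p::'a poly. degree p \<le> n}" for n
  define A where "A i = {a::'a poly. degree a = i \<and> lead_coeff a \<in> S}" for i
  have Lf: "finite (L n)" and Lc: "card (L n) \<le> Q ^ Suc n" for n
    using L_bound[of n, where 'a='a] by (auto simp: L_def Q_def)
  have Af: "finite (A i)" and Ac: "card (A i) \<le> card S * Q ^ i" for i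
    using A_bound[of i S] by (auto simp: A_def Q_def)
  define U1 where "U1 = (\<Union>i\<in>{..t}. \<Union>j\<in>{..t}. A i \<times> (L j \<times> (L (m-j) \<times> L (m-i))))"
  define U2 where "U2 = (\<Union>i\<in>{..t}. A i \<times> ({0::'a poly} \<times> (L u \<times> L (m-i))))"
  have four': "(4::'a poly) \<noteq> 0"
  proof
    assume "(4::'a poly) = 0"
    hence "[:4::'a:] = 0" by (metis of_nat_numeral of_nat_poly)
    thus False using four by simp
  qed
  have cover: "Fs h s \<subseteq> U1 \<union> U2"
  proof
    fix f assume fF: "f \<in> Fs h s"
    obtain a b c d where fe: "f = (a,b,c,d)" by (cases f) auto
    have irr: "bcf_irreducible (a,b,c,d)" and dd: "degree (bcf_disc (a,b,c,d)) = s"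
      and da: "real (degree a) \<le> real s / 4" and db: "real (degree b) \<le> real s / 4"
      and dad: "real (degree (a*d)) \<le> real s / 2" and dbc: "real (degree (b*c)) \<le> real s / 2"
      and la: "lead_coeff a \<in> S"
      using fF unfolding fe Fs_def S_def by auto
    have a0: "a \<noteq> 0" using irr by (simp add: bcf_irreducible_def)
    define i where "i = degree a"
    have "4 * degree a \<le> s" using da by linarith
    hence it: "i \<le> t" unfolding i_def t_def by presburger
    have "2 * degree (a*d) \<le> s" using dad by linarith
    hence adm: "degree (a*d) \<le> m" unfolding m_def by presburger
    have im: "i \<le> m" unfolding i_def m_def using \<open>4 * degree a \<le> s\<close> by presburger
    have aA: "a \<in> A i" using la by (simp add: A_def i_def)
    have dL: "d \<in> L (m - i)"
    proof (cases "d = 0")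
      case True thus ?thesis by (simp add: L_def)
    next
      case False
      hence "degree (a*d) = i + degree d" using a0 by (simp add: degree_mult_eq i_def)
      thus ?thesis using adm by (simp add: L_def)
    qed
    show "f \<in> U1 \<union> U2"
    proof (cases "b = 0")
      case False
      define j where "j = degree b"
      have "4 * degree b \<le> s" using db by linarith
      hence jt: "j \<le> t" unfolding j_def t_def by presburger
      have "2 * degree (b*c) \<le> s" using dbc by linarith
      hence bcm: "degree (b*c) \<le> m" unfolding m_def by presburger
      have bL: "b \<in> L j" by (simp add: L_def j_def)
      have cL: "c \<in> L (m - j)"
      proof (cases "c = 0")
        case True thus ?thesis by (simp add: L_def)
      next
        case c0: False
        hence "degree (b*c) = j + degree c" using False by (simp add: degree_mult_eq j_def)
        thus ?thesis using bcm by (simp add: L_def)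
      qed
      have "f \<in> A i \<times> (L j \<times> (L (m-j) \<times> L (m-i)))" using aA bL cL dL fe by simp
      hence "f \<in> U1" unfolding U1_def using it jt by blast
      thus ?thesis by simp
    next
      case True
      have cL: "c \<in> L u"
      proof (rule ccontr)
        assume "c \<notin> L u"
        hence cu: "degree c > u" by (simp add: L_def)
        hence c0: "c \<noteq> 0" by auto
        have "3 * degree c > s" using cu unfolding u_def by presburger
        have d1: "degree (4*a*c^3) = degree a + 3 * degree c"
          using four' a0 c0 by (simp add: degree_mult_eq degree_power_eq)
        have "degree (27*(a*d)^2) \<le> degree ((a*d)^2)"
          using degree_mult_le[of 27 "(a*d)^2"] by simp
        also have "\<dots> \<le> 2 * degree (a*d)" using degree_power_le by (metis mult.commute)
        also have "\<dots> \<le> s" using adm unfolding m_def by presburger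
        finally have d2: "degree (27*(a*d)^2) < degree (4*a*c^3)"
          using d1 \<open>3 * degree c > s\<close> by linarith
        have "degree (bcf_disc (a,b,c,d)) = degree (4*a*c^3 + 27*(a*d)^2)"
          using True by (simp only: disc_b0 degree_minus)
        also have "\<dots> = degree (4*a*c^3)" using d2 by (rule degree_add_eq_left)
        finally have "degree (bcf_disc (a,b,c,d)) = degree (4*a*c^3)" .
        thus False using dd d1 \<open>3 * degree c > s\<close> by linarith
      qed
      have "f \<in> A i \<times> ({0::'a poly} \<times> (L u \<times> L (m-i)))" using aA cL dL fe True by simp
      hence "f \<in> U2" unfolding U2_def using it by blast
      thus ?thesis by simp
    qed
  qed
  have U1f: "finite U1" unfolding U1_def using Af Lf by auto
  have U2f: "finite U2" unfolding U2_def using Af Lf by auto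
  have c1: "card U1 \<le> (t+1)^2 * card S * Q^(2*m+3)"
  proof -
    have "card U1 \<le> (\<Sum>i\<in>{..t}. card (\<Union>j\<in>{..t}. A i \<times> (L j \<times> (L (m-j) \<times> L (m-i)))))"
      unfolding U1_def by (rule card_UN_le) simp
    also have "\<dots> \<le> (\<Sum>i\<in>{..t}. \<Sum>j\<in>{..t}. card (A i \<times> (L j \<times> (L (m-j) \<times> L (m-i)))))"
      by (intro sum_mono card_UN_le) simp
    also have "\<dots> \<le> (\<Sum>i\<in>{..t}. \<Sum>j\<in>{..t}. card S * Q^(2*m+3))"
    proof (intro sum_mono)
      fix i j assume i: "i \<in> {..t}" and j: "j \<in> {..t}"
      have "t \<le> m" unfolding t_def m_def by presburger
      hence im: "i \<le> m" and jm: "j \<le> m" using i j by auto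
      have "card (A i \<times> (L j \<times> (L (m-j) \<times> L (m-i)))) = card (A i) * (card (L j) * (card (L (m-j)) * card (L (m-i))))"
        by (simp add: card_cartesian_product)
      also have "\<dots> \<le> (card S * Q^i) * (Q^Suc j * (Q^Suc (m-j) * Q^Suc (m-i)))"
        by (intro mult_le_mono Ac Lc)
      also have "\<dots> = card S * Q^(2*m+3)"
      proof -
        have e: "i + (Suc j + (Suc (m-j) + Suc (m-i))) = 2*m+3" using im jm by simp
        have "Q^i * (Q^Suc j * (Q^Suc (m-j) * Q^Suc (m-i))) = Q^(i + (Suc j + (Suc (m-j) + Suc (m-i))))"
          by (simp only: power_add)
        hence "Q^i * (Q^Suc j * (Q^Suc (m-j) * Q^Suc (m-i))) = Q^(2*m+3)" by (simp only: e)
        thus ?thesis by (simp add: mult.assoc)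
      qed
      finally show "card (A i \<times> (L j \<times> (L (m-j) \<times> L (m-i)))) \<le> card S * Q^(2*m+3)" .
    qed
    also have "\<dots> = (t+1)^2 * card S * Q^(2*m+3)" by (simp add: power2_eq_square algebra_simps)
    finally show ?thesis .
  qed
  have c2: "card U2 \<le> (t+1) * card S * Q^(m+u+2)"
  proof -
    have "card U2 \<le> (\<Sum>i\<in>{..t}. card (A i \<times> ({0::'a poly} \<times> (L u \<times> L (m-i)))))"
      unfolding U2_def by (rule card_UN_le) simp
    also have "\<dots> \<le> (\<Sum>i\<in>{..t}. card S * Q^(m+u+2))"
    proof (intro sum_mono)
      fix i assume i: "i \<in> {..t}"
      have "t \<le> m" unfolding t_def m_def by presburger
      hence im: "i \<le> m" using i by auto
      have "card (A i \<times> ({0::'a poly} \<times> (L u \<times> L (m-i)))) = card (A i) * (card (L u) * card (L (m-i)))"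
        by (simp add: card_cartesian_product)
      also have "\<dots> \<le> (card S * Q^i) * (Q^Suc u * Q^Suc (m-i))"
        by (intro mult_le_mono Ac Lc)
      also have "\<dots> = card S * Q^(m+u+2)"
      proof -
        have e: "i + (Suc u + Suc (m-i)) = m+u+2" using im by simp
        have "Q^i * (Q^Suc u * Q^Suc (m-i)) = Q^(i + (Suc u + Suc (m-i)))"
          by (simp only: power_add)
        hence "Q^i * (Q^Suc u * Q^Suc (m-i)) = Q^(m+u+2)" by (simp only: e)
        thus ?thesis by (simp add: mult.assoc)
      qed
      finally show "card (A i \<times> ({0::'a poly} \<times> (L u \<times> L (m-i)))) \<le> card S * Q^(m+u+2)" .
    qed
    also have "\<dots> = (t+1) * card S * Q^(m+u+2)" by (simp add: algebra_simps)
    finally show ?thesis .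
  qed
  have "card (Fs h s) \<le> card (U1 \<union> U2)" using cover U1f U2f by (intro card_mono) auto
  also have "\<dots> \<le> card U1 + card U2" by (rule card_Un_le)
  finally show ?thesis using c1 c2 unfolding S_def by linarith
qed


lemma real_final:
  fixes T x c qr Q Z2 :: real and k :: nat
  assumes T0: "0 \<le> T" and Tx: "T \<le> x/4" and c0: "0 \<le> c" and cq: "c \<le> qr/2"
    and q1: "1 \<le> qr" and Q0: "0 \<le> Q" and x1: "1 \<le> x" and k3: "k \<le> 3"
    and Z0: "0 \<le> Z2" and Zq: "Z2 \<le> qr^2*Q"
  shows "(T+1)^2*c*(qr^k*Q) + (T+1)*c*Z2 \<le> qr^(Suc k)/32 * x^2 * Q + 2*qr^4 * x * Q"
proof -
  have qk: "0 \<le> qr^k" using q1 by simp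
  have qk3: "qr^k \<le> qr^3" using q1 k3 by (intro power_increasing) auto
  have h1: "(T+1)^2 \<le> (x/4+1)^2" using T0 Tx by (intro power_mono) auto
  have h2: "(T+1)^2*c \<le> (x/4+1)^2*(qr/2)" using h1 cq c0 by (intro mult_mono) auto
  have t1: "(T+1)^2*c*(qr^k*Q) \<le> (x/4+1)^2*(qr/2)*(qr^k*Q)"
    using h2 qk Q0 by (intro mult_right_mono) auto
  have e1: "(x/4+1)^2*(qr/2)*(qr^k*Q) = qr^(Suc k)/32 * x^2 * Q + (x/4+1/2)*(qr^k*qr)*Q"
    by (simp add: power2_eq_square algebra_simps)
  have t1b: "(x/4+1/2)*(qr^k*qr)*Q \<le> (x/4+1/2)*(qr^3*qr)*Q"
    using qk3 q1 Q0 x1 by (intro mult_right_mono mult_left_mono) auto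
  have h3: "(T+1)*c \<le> (x/4+1)*(qr/2)" using Tx cq c0 T0 by (intro mult_mono) auto
  have t2: "(T+1)*c*Z2 \<le> (x/4+1)*(qr/2)*(qr^2*Q)"
    by (rule mult_mono[OF h3 Zq]) (use x1 q1 Z0 in auto)
  have t2b: "(x/4+1)*(qr/2)*(qr^2*Q) = (x/4+1)/2*(qr^3)*Q" by (simp add: power2_eq_square power3_eq_cube algebra_simps)
  have q34: "qr^3 \<le> qr^3*qr" using q1 by simp
  have t2c: "(x/4+1)/2*(qr^3)*Q \<le> (x/4+1)/2*(qr^3*qr)*Q"
    using q34 Q0 x1 by (intro mult_right_mono mult_left_mono) auto
  have fin: "(x/4+1/2)*(qr^3*qr)*Q + (x/4+1)/2*(qr^3*qr)*Q \<le> 2*qr^4*x*Q"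
  proof -
    have q4: "qr^3*qr = qr^4" by (simp add: power3_eq_cube power4_eq_xxxx)
    have w: "(x/4+1/2)*W + (x/4+1)/2*W = (3*x/8 + 1) * W" for W :: real
      by (simp add: field_simps)
    have "(x/4+1/2)*(qr^3*qr)*Q + (x/4+1)/2*(qr^3*qr)*Q = (3*x/8 + 1) * (qr^4*Q)"
      using w[of "qr^4*Q"] unfolding q4 by (simp add: mult.assoc)
    also have "\<dots> \<le> (2*x) * (qr^4*Q)" using x1 Q0 q1 by (intro mult_right_mono) auto
    finally show ?thesis by (simp add: algebra_simps)
  qed
  show ?thesis using t1 e1 t1b t2 t2b t2c fin by linarith
qed

theorem mainTheorem14:
  fixes h :: "'a::{field,finite}"
  defines "q \<equiv> fsize TYPE('a)"
  assumes "coprime q (6::nat)"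
    and "primitive_root h"
  shows "\<exists>C::real. \<forall>\<^sub>F s in sequentially.
     real (card (Fs h s)) \<le>
       (if odd s then real q ^ 3 / 32 else real q ^ 4 / 32)
         * real s ^ 2 * real q ^ s + C * real s * real q ^ s"
proof -
  have qd: "q = card (UNIV::'a set)" by (simp add: q_def fsize_def)
  have two: "(2::'a) \<noteq> 0" using two_ne_zero_field[where 'a='a] assms(2) qd by simp
  have four: "(4::'a) \<noteq> 0"
  proof
    assume z: "(4::'a) = 0"
    have e: "(2::'a) * 2 = 4" by simp
    have "(2::'a) * 2 = 0" using z e by (simp only:)
    thus False using two mult_eq_0_iff by blast
  qed
  have oq: "odd q"
  proof
    assume "even q"
    hence "2 dvd gcd q 6" by simp
    thus False using assms(2) by simp
  qed
  have q2: "q \<ge> 2"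
  proof -
    have "{0::'a, 1} \<subseteq> UNIV" by simp
    hence "card {0::'a, 1} \<le> card (UNIV::'a set)" by (intro card_mono) auto
    thus ?thesis using qd by simp
  qed
  have cS: "real (card (sgn_set h)) \<le> real q / 2"
  proof -
    have "sgn_set h = (\<lambda>i. h^i) ` {..(q - 3) div 2}" unfolding sgn_set_def qd by auto
    hence "card (sgn_set h) \<le> card {..(q - 3) div 2}" using card_image_le[of "{..(q - 3) div 2}" "\<lambda>i. h^i"] by simp
    hence "card (sgn_set h) \<le> (q - 3) div 2 + 1" by simp
    moreover have "2 * ((q - 3) div 2 + 1) \<le> q" using oq q2 by presburger
    ultimately have "2 * card (sgn_set h) \<le> q"
      using mult_le_mono2[of "card (sgn_set h)" "(q - 3) div 2 + 1" 2] le_trans by blast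
    hence "real (2 * card (sgn_set h)) \<le> real q" by (simp only: of_nat_le_iff)
    thus ?thesis by simp
  qed
  have key: "real (card (Fs h s)) \<le>
       (if odd s then real q ^ 3 / 32 else real q ^ 4 / 32)
         * real s ^ 2 * real q ^ s + (2 * real q ^ 4) * real s * real q ^ s" if s1: "s \<ge> 1" for s
  proof -
    define t where "t = s div 4"
    define m where "m = s div 2"
    define u where "u = s div 3"
    define k where "k = (if odd s then 2 else 3::nat)"
    have B: "card (Fs h s) \<le> (t + 1)^2 * card (sgn_set h) * q^(2*m+3)
          + (t + 1) * card (sgn_set h) * q^(m + u + 2)"
      using card_Fs_bound[OF four, of h s] by (simp add: t_def m_def u_def qd)
    hence B': "real (card (Fs h s)) \<le> (real t + 1)^2 * real (card (sgn_set h)) * real q^(2*m+3)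
          + (real t + 1) * real (card (sgn_set h)) * real q^(m + u + 2)"
      by (metis (mono_tags, lifting) of_nat_add of_nat_le_iff of_nat_mult of_nat_power of_nat_1)
    have ek: "2*m+3 = k + s" unfolding k_def m_def by presburger
    have p1: "real q^(2*m+3) = real q ^ k * real q ^ s" by (simp add: ek power_add)
    have mu: "m + u + 2 \<le> 2 + s" unfolding m_def u_def by presburger
    have p2: "real q^(m+u+2) \<le> real q^2 * real q^s"
    proof -
      have "real q^(m+u+2) \<le> real q^(2+s)" using q2 mu by (intro power_increasing) auto
      also have "real q^(2+s) = real q^2 * real q^s" by (rule power_add)
      finally show ?thesis .
    qed
    have Tx: "real t \<le> real s / 4"
    proof -
      have "4 * t \<le> s" unfolding t_def by presburger
      hence "real (4*t) \<le> real s" by (simp only: of_nat_le_iff)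
      thus ?thesis by simp
    qed
    have R: "(real t+1)^2*real (card (sgn_set h))*(real q^k*real q^s) + (real t+1)*real (card (sgn_set h))*real q^(m+u+2)
        \<le> real q^(Suc k)/32 * real s^2 * real q^s + 2*real q^4 * real s * real q^s"
      by (rule real_final[OF _ Tx _ cS]) (use q2 s1 p2 in \<open>auto simp: k_def\<close>)
    have "real q^(Suc k)/32 = (if odd s then real q ^ 3 / 32 else real q ^ 4 / 32)"
      by (cases "odd s") (simp_all add: k_def power2_eq_square power3_eq_cube power4_eq_xxxx)
    thus ?thesis using B' R p1 by (simp add: mult.assoc)
  qed
  show ?thesis
    by (rule exI[of _ "2 * real q ^ 4"], rule eventually_sequentiallyI[of 1]) (rule key)
qed

end
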